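(* Let $d\ge 3$, $\lambda>0$ with $\log d\lesssim\lambda\lesssim d$, $\rho_0=\log^{-c_0}d$ for a constant $c_0>0$, $\mu=\rho_0/(d+\lambda)$, and let $(a,b,c)$ solve \[ \dot a=a(24-16a-8r),\quad \dot b=8(1+\lambda)(1-r)b-16(1+\lambda)^2b^2,\quad \dot c=8(1-r)c-16c^2, \] with $r=a+(1+\lambda)b+(d-2)c$ and $a(0)=b(0)=c(0)=\mu$. Fix $\rho\in(0,1/12)$, $\varepsilon\in(0,1/4]$ and define $T_{1a}=\inf\{t\ge0:r(t)\ge\rho\}$, $T_1=\inf\{t\ge T_{1a}:\dot b(t)\le0\}$, $T_{2a}=\inf\{t\ge T_1:r(t)\ge1-\varepsilon\}$, $T_2=\inf\{t\ge T_{2a}:a(t)\ge\rho\}$. Then, for $d$ large enough: (1) $T_2-T_{2a}=\Theta\big(\log(1/a(T_{2a}))\big)=\Theta(\log d)$; (2) $\mathrm{Align}(T_2)=1-O(\lambda^{-2})-o(1)$.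
   Context: This ODE is the population gradient flow of the phase-retrieval model $y=(x^\top w_\star)^2+\nu$, $x\sim\mathcal N(0,I_d+\lambda vv^\top)$ ($v\perp w_\star$ unit vectors), with network $f_W(x)=\sum_{j=1}^d(w_j^\top x)^2$, in the coordinates $WW^\top=a\,w_\star w_\star^\top+b\,vv^\top+c(I-w_\star w_\star^\top-vv^\top)$, started from $WW^\top=\mu I_d$. The alignment is $\mathrm{Align}(t)=a(t)/\sqrt{a(t)^2+b(t)^2+(d-2)c(t)^2}$. Asymptotic notation refers to $d\to\infty$ with $\varepsilon,\rho$ fixed. *)

theory Defs
  imports "HOL-Analysis.Analysis" "HOL-Library.Landau_Symbols"
begin

definition rr :: "real \<Rightarrow> nat \<Rightarrow> real \<Rightarrow> real \<Rightarrow> real \<Rightarrow> real" where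
  "rr lam d a b c = a + (1 + lam) * b + (real d - 2) * c"

definition adot :: "real \<Rightarrow> nat \<Rightarrow> real \<Rightarrow> real \<Rightarrow> real \<Rightarrow> real" where
  "adot lam d a b c = a * (24 - 16 * a - 8 * rr lam d a b c)"

definition bdot :: "real \<Rightarrow> nat \<Rightarrow> real \<Rightarrow> real \<Rightarrow> real \<Rightarrow> real" where
  "bdot lam d a b c = 8 * (1 + lam) * (1 - rr lam d a b c) * b - 16 * (1 + lam)^2 * b^2"

definition cdot :: "real \<Rightarrow> nat \<Rightarrow> real \<Rightarrow> real \<Rightarrow> real \<Rightarrow> real" where
  "cdot lam d a b c = 8 * (1 - rr lam d a b c) * c - 16 * c^2"

definition is_sol :: "real \<Rightarrow> nat \<Rightarrow> real \<Rightarrow> (real \<Rightarrow> real) \<Rightarrow> (real \<Rightarrow> real) \<Rightarrow> (real \<Rightarrow> real) \<Rightarrow> bool" where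
  "is_sol lam d mu a b c \<longleftrightarrow>
     a 0 = mu \<and> b 0 = mu \<and> c 0 = mu \<and>
     (\<forall>t\<ge>0.
        (a has_real_derivative adot lam d (a t) (b t) (c t)) (at t within {0..}) \<and>
        (b has_real_derivative bdot lam d (a t) (b t) (c t)) (at t within {0..}) \<and>
        (c has_real_derivative cdot lam d (a t) (b t) (c t)) (at t within {0..}))"

definition align :: "nat \<Rightarrow> real \<Rightarrow> real \<Rightarrow> real \<Rightarrow> real" where
  "align d a b c = a / sqrt (a^2 + b^2 + (real d - 2) * c^2)"

definition T1a :: "real \<Rightarrow> nat \<Rightarrow> real \<Rightarrow> (real \<Rightarrow> real) \<Rightarrow> (real \<Rightarrow> real) \<Rightarrow> (real \<Rightarrow> real) \<Rightarrow> real" where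
  "T1a lam d \<rho> a b c = Inf {t. t \<ge> 0 \<and> rr lam d (a t) (b t) (c t) \<ge> \<rho>}"

definition T1 :: "real \<Rightarrow> nat \<Rightarrow> real \<Rightarrow> (real \<Rightarrow> real) \<Rightarrow> (real \<Rightarrow> real) \<Rightarrow> (real \<Rightarrow> real) \<Rightarrow> real" where
  "T1 lam d \<rho> a b c = Inf {t. t \<ge> T1a lam d \<rho> a b c \<and> bdot lam d (a t) (b t) (c t) \<le> 0}"

definition T2a :: "real \<Rightarrow> nat \<Rightarrow> real \<Rightarrow> real \<Rightarrow> (real \<Rightarrow> real) \<Rightarrow> (real \<Rightarrow> real) \<Rightarrow> (real \<Rightarrow> real) \<Rightarrow> real" where
  "T2a lam d \<rho> \<epsilon> a b c = Inf {t. t \<ge> T1 lam d \<rho> a b c \<and> rr lam d (a t) (b t) (c t) \<ge> 1 - \<epsilon>}"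

definition T2 :: "real \<Rightarrow> nat \<Rightarrow> real \<Rightarrow> real \<Rightarrow> (real \<Rightarrow> real) \<Rightarrow> (real \<Rightarrow> real) \<Rightarrow> (real \<Rightarrow> real) \<Rightarrow> real" where
  "T2 lam d \<rho> \<epsilon> a b c = Inf {t. t \<ge> T2a lam d \<rho> \<epsilon> a b c \<and> a t \<ge> \<rho>}"

end

theory Submission
  imports Defs "HOL-Real_Asymp.Real_Asymp"
begin



lemma der_cont:
  fixes f f' :: "real \<Rightarrow> real"
  assumes D: "\<forall>t\<ge>0. (f has_real_derivative f' t) (at t within {0..})"
  shows "continuous_on {0..} f"
  unfolding continuous_on_eq_continuous_within using D DERIV_continuous by blast

lemma der_at:
  fixes f f' :: "real \<Rightarrow> real"
  assumes D: "\<forall>t\<ge>0. (f has_real_derivative f' t) (at t within {0..})" and t: "t > 0"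
  shows "(f has_real_derivative f' t) (at t)"
proof -
  have "(f has_real_derivative f' t) (at t within {0<..})"
    using D t by (meson DERIV_subset greaterThan_iff atLeast_iff less_imp_le subsetI)
  then show ?thesis using at_within_open[of t "{0<..}"] t by auto
qed

lemma G1:
  fixes f f' :: "real \<Rightarrow> real"
  assumes D: "\<forall>t\<ge>0. (f has_real_derivative f' t) (at t within {0..})"
    and st: "0 \<le> s" "s \<le> t" and nn: "\<And>u. s < u \<Longrightarrow> u < t \<Longrightarrow> f' u \<ge> 0"
  shows "f s \<le> f t"
proof (rule DERIV_nonneg_imp_increasing_open[OF st(2)])
  show "\<And>x. s < x \<Longrightarrow> x < t \<Longrightarrow> \<exists>y. (f has_real_derivative y) (at x) \<and> 0 \<le> y"
    using der_at[OF D] nn st by (meson le_less_trans)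
  show "continuous_on {s..t} f"
    using der_cont[OF D] by (rule continuous_on_subset) (use st in auto)
qed

lemma G2:
  fixes f f' :: "real \<Rightarrow> real"
  assumes D: "\<forall>t\<ge>0. (f has_real_derivative f' t) (at t within {0..})"
    and st: "0 \<le> s" "s \<le> t" and nn: "\<And>u. s \<le> u \<Longrightarrow> u \<le> t \<Longrightarrow> f' u \<ge> k * f u"
  shows "f t \<ge> f s * exp (k * (t - s))"
proof -
  define h where "h u = f u * exp (- k * u)" for u
  have Dh: "\<forall>u\<ge>0. (h has_real_derivative (f' u * exp (- k * u) + f u * (exp (- k * u) * (- k)))) (at u within {0..})"
    unfolding h_def using D by (auto intro!: derivative_eq_intros)
  have "h s \<le> h t"
  proof (rule G1[OF Dh st])
    fix u assume "s < u" "u < t"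
    then have "f' u \<ge> k * f u" using nn by auto
    then have "(f' u - k * f u) * exp (- k * u) \<ge> 0" by simp
    then show "f' u * exp (- k * u) + f u * (exp (- k * u) * - k) \<ge> 0" by (simp add: algebra_simps)
  qed
  then have "f s * exp (- k * s) * exp (k * t) \<le> f t * exp (- k * t) * exp (k * t)"
    unfolding h_def by (simp add: mult_right_mono)
  also have "\<dots> = f t" by (simp add: mult.assoc flip: exp_add)
  finally show ?thesis by (simp add: mult.assoc right_diff_distrib flip: exp_add)
qed

lemma G3:
  fixes f f' :: "real \<Rightarrow> real"
  assumes D: "\<forall>t\<ge>0. (f has_real_derivative f' t) (at t within {0..})"
    and st: "0 \<le> s" "s \<le> t" and nn: "\<And>u. s \<le> u \<Longrightarrow> u \<le> t \<Longrightarrow> f' u \<le> k * f u"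
  shows "f t \<le> f s * exp (k * (t - s))"
proof -
  have D': "\<forall>t\<ge>0. ((\<lambda>u. - f u) has_real_derivative - f' t) (at t within {0..})"
    using D by (auto intro!: derivative_eq_intros)
  have "- f t \<ge> - f s * exp (k * (t - s))"
    by (rule G2[OF D' st]) (use nn in force)
  then show ?thesis by simp
qed

lemma G0:
  fixes f :: "real \<Rightarrow> real"
  assumes C: "continuous_on {0..} f" and f0: "f 0 < M" and t1: "0 \<le> t1" "f t1 \<ge> M"
  shows "\<exists>t0. 0 < t0 \<and> t0 \<le> t1 \<and> f t0 = M \<and> (\<forall>s. 0 \<le> s \<and> s < t0 \<longrightarrow> f s < M)"
proof -
  define S where "S = {0..t1} \<inter> f -` {M..}"
  have C1: "continuous_on {0..t1} f" using C by (rule continuous_on_subset) auto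
  have cl: "closed S" unfolding S_def by (rule continuous_closed_preimage[OF C1]) auto
  have ne: "S \<noteq> {}" using t1 unfolding S_def by auto
  have bb: "bdd_below S" unfolding S_def by (rule bdd_belowI[of _ 0]) auto
  define t0 where "t0 = Inf S"
  have t0S: "t0 \<in> S" unfolding t0_def using closed_contains_Inf[OF ne bb cl] .
  have below: "f s < M" if "0 \<le> s" "s < t0" for s
  proof (rule ccontr)
    assume "\<not> f s < M"
    then have "s \<in> S" using that t0S unfolding S_def by auto
    then have "t0 \<le> s" unfolding t0_def by (rule cInf_lower[OF _ bb])
    with that show False by simp
  qed
  have t0r: "0 \<le> t0" "t0 \<le> t1" "f t0 \<ge> M" using t0S unfolding S_def by auto
  have "t0 \<noteq> 0" using t0r f0 by auto
  with t0r have pos: "t0 > 0" by simp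
  have C2: "continuous_on {0..t0} f" using C by (rule continuous_on_subset) auto
  obtain x where x: "0 \<le> x" "x \<le> t0" "f x = M"
    using IVT'[of f 0 M t0, OF _ t0r(3) _ C2] f0 t0r by auto
  have "x = t0" using below[of x] x by force
  then show ?thesis using pos t0r x below by auto
qed

lemma G4:
  fixes f f' :: "real \<Rightarrow> real"
  assumes D: "\<forall>t\<ge>0. (f has_real_derivative f' t) (at t within {0..})"
    and f0: "f 0 < M" and bar: "\<And>t. t > 0 \<Longrightarrow> f t = M \<Longrightarrow> f' t < 0"
  shows "\<forall>t\<ge>0. f t < M"
proof (rule ccontr)
  assume "\<not> (\<forall>t\<ge>0. f t < M)"
  then obtain t1 where t1: "0 \<le> t1" "f t1 \<ge> M" by (auto simp: not_less)
  obtain t0 where t0: "0 < t0" "t0 \<le> t1" "f t0 = M" "\<forall>s. 0 \<le> s \<and> s < t0 \<longrightarrow> f s < M"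
    using G0[OF der_cont[OF D] f0 t1] by blast
  obtain e where e: "e > 0" "\<forall>h>0. h < e \<longrightarrow> f t0 < f (t0 - h)"
    using DERIV_neg_dec_left[OF der_at[OF D t0(1)] bar[OF t0(1) t0(3)]] by blast
  define h where "h = min (e/2) (t0/2)"
  have "h > 0" "h < e" "h \<le> t0/2" using e t0 unfolding h_def by auto
  then have "f t0 < f (t0 - h)" "f (t0 - h) < M" using e t0 by auto
  then show False using t0 by simp
qed

lemma G5:
  fixes f f' \<phi> :: "real \<Rightarrow> real"
  assumes D: "\<forall>t\<ge>0. (f has_real_derivative f' t) (at t within {0..})"
    and eq: "\<And>t. t \<ge> 0 \<Longrightarrow> f' t = f t * \<phi> t" and C: "continuous_on {0..} \<phi>" and f0: "f 0 > 0"
  shows "\<forall>t\<ge>0. f t > 0"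
proof (rule ccontr)
  assume "\<not> (\<forall>t\<ge>0. f t > 0)"
  then obtain t1 where t1: "0 \<le> t1" "- f t1 \<ge> 0" by (auto simp: not_less)
  have Cm: "continuous_on {0..} (\<lambda>u. - f u)"
    using der_cont[OF D] by (intro continuous_intros)
  obtain t0 where t0: "0 < t0" "t0 \<le> t1" "- f t0 = 0" "\<forall>s. 0 \<le> s \<and> s < t0 \<longrightarrow> - f s < 0"
    using G0[OF Cm _ t1] f0 by auto
  have "compact (\<phi> ` {0..t0})"
    by (rule compact_continuous_image[OF continuous_on_subset[OF C]]) auto
  then have "bounded (\<phi> ` {0..t0})" by (rule compact_imp_bounded)
  then obtain B where B0: "\<forall>y\<in>\<phi> ` {0..t0}. \<bar>y\<bar> \<le> B"
    unfolding bounded_real by blast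
  then have B: "\<forall>u\<in>{0..t0}. \<bar>\<phi> u\<bar> \<le> B" by simp
  have "f t0 \<ge> f 0 * exp ((- B) * (t0 - 0))"
  proof (rule G2[OF D])
    fix u assume u: "0 \<le> u" "u \<le> t0"
    have fu: "f u \<ge> 0" using t0 u by (cases "u = t0") auto
    have "\<phi> u \<ge> - B" using B u by force
    then have "f u * \<phi> u \<ge> f u * (- B)" using fu by (intro mult_left_mono) auto
    then show "f' u \<ge> - B * f u" using eq[of u] u by (simp add: mult.commute)
  qed (use t0 in auto)
  moreover have "f 0 * exp ((- B) * (t0 - 0)) > 0" using f0 by simp
  ultimately show False using t0 by simp
qed



locale sys =
  fixes lam :: real and d :: nat and rho0 :: real and a b c :: "real \<Rightarrow> real"
  assumes d3: "d \<ge> 3" and lam: "lam > 0" and r0: "0 < rho0" "rho0 < 1/3"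
    and sol: "is_sol lam d (rho0 / (real d + lam)) a b c"
begin

definition "mu = rho0 / (real d + lam)"
definition "R t = rr lam d (a t) (b t) (c t)"
definition "BB t = (1 + lam) * b t"
definition "CC t = (real d - 2) * c t"
definition "A' t = adot lam d (a t) (b t) (c t)"
definition "B' t = bdot lam d (a t) (b t) (c t)"
definition "C' t = cdot lam d (a t) (b t) (c t)"

lemma dpos: "real d - 2 \<ge> 1" "real d + lam > 0" using d3 lam by auto

lemma init: "a 0 = mu" "b 0 = mu" "c 0 = mu" using sol unfolding is_sol_def mu_def by auto
lemma Da: "\<forall>t\<ge>0. (a has_real_derivative A' t) (at t within {0..})"
  using sol unfolding is_sol_def A'_def by auto
lemma Db: "\<forall>t\<ge>0. (b has_real_derivative B' t) (at t within {0..})"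
  using sol unfolding is_sol_def B'_def by auto
lemma Dc: "\<forall>t\<ge>0. (c has_real_derivative C' t) (at t within {0..})"
  using sol unfolding is_sol_def C'_def by auto

lemma R_eq: "R t = a t + BB t + CC t" unfolding R_def BB_def CC_def rr_def by simp
lemma A'_eq: "A' t = a t * (24 - 16 * a t - 8 * R t)" unfolding A'_def adot_def R_def by simp
lemma B'_eq: "B' t = b t * (8 * (1 + lam) * (1 - R t - 2 * BB t))"
  unfolding B'_def bdot_def R_def BB_def by (simp add: algebra_simps power2_eq_square)
lemma C'_eq: "C' t = c t * (8 * (1 - R t - 2 * c t))"
  unfolding C'_def cdot_def R_def by (simp add: algebra_simps power2_eq_square)

lemma mu_pos: "mu > 0" unfolding mu_def using r0 dpos by simp
lemma mu_le: "mu \<le> rho0" unfolding mu_def using r0 d3 lam by (simp add: divide_le_eq)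
lemma CC0: "CC 0 = (real d - 2) * mu" unfolding CC_def init ..
lemma CC0_le: "CC 0 \<le> rho0" unfolding CC0 mu_def using r0 dpos lam
  by (simp add: mult_le_cancel_left_pos divide_le_eq)

lemma contR: "continuous_on {0..} R"
  using der_cont[OF Da] der_cont[OF Db] der_cont[OF Dc]
  unfolding R_def rr_def by (intro continuous_intros)

lemma a_pos: "\<forall>t\<ge>0. a t > 0"
proof (rule G5[OF Da])
  show "\<And>t. 0 \<le> t \<Longrightarrow> A' t = a t * (24 - 16 * a t - 8 * R t)" by (rule A'_eq)
  show "continuous_on {0..} (\<lambda>t. 24 - 16 * a t - 8 * R t)"
    using der_cont[OF Da] contR by (intro continuous_intros)
qed (simp add: init mu_pos)

lemma b_pos: "\<forall>t\<ge>0. b t > 0"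
proof (rule G5[OF Db])
  show "\<And>t. 0 \<le> t \<Longrightarrow> B' t = b t * (8 * (1 + lam) * (1 - R t - 2 * BB t))" by (rule B'_eq)
  show "continuous_on {0..} (\<lambda>t. 8 * (1 + lam) * (1 - R t - 2 * BB t))"
    using der_cont[OF Db] contR unfolding BB_def by (intro continuous_intros)
qed (simp add: init mu_pos)

lemma c_pos: "\<forall>t\<ge>0. c t > 0"
proof (rule G5[OF Dc])
  show "\<And>t. 0 \<le> t \<Longrightarrow> C' t = c t * (8 * (1 - R t - 2 * c t))" by (rule C'_eq)
  show "continuous_on {0..} (\<lambda>t. 8 * (1 - R t - 2 * c t))"
    using der_cont[OF Dc] contR by (intro continuous_intros)
qed (simp add: init mu_pos)

lemma BB_pos: "t \<ge> 0 \<Longrightarrow> BB t > 0" unfolding BB_def using b_pos lam by simp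
lemma CC_pos: "t \<ge> 0 \<Longrightarrow> CC t > 0" unfolding CC_def using c_pos dpos by simp

lemma a_lt1: "\<forall>t\<ge>0. a t < 1"
proof (rule G4[OF Da])
  show "a 0 < 1" using init mu_le r0 by simp
  fix t :: real assume t: "t > 0" "a t = 1"
  have "R t > 1" using R_eq[of t] BB_pos[of t] CC_pos[of t] t by simp
  then show "A' t < 0" using A'_eq[of t] t by simp
qed

lemma b_bound: "\<forall>t\<ge>0. b t < 1 / (3 * (1 + lam))"
proof (rule G4[OF Db])
  have "3 * rho0 * (1 + lam) < 1 * (1 + lam)"
    using r0 lam by (intro mult_strict_right_mono) auto
  also have "\<dots> \<le> real d + lam" using d3 by simp
  finally have lt: "3 * rho0 * (1 + lam) < real d + lam" .
  have "mu * (3 * (1 + lam)) = (3 * rho0 * (1 + lam)) / (real d + lam)" unfolding mu_def by simp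
  then have "mu * (3 * (1 + lam)) < 1" using lt dpos by (simp add: divide_less_eq_1_pos)
  then show "b 0 < 1 / (3 * (1 + lam))" using init lam by (simp add: less_divide_eq)
  fix t :: real assume t: "t > 0" "b t = 1 / (3 * (1 + lam))"
  have bb: "BB t = 1/3" unfolding BB_def using t lam by simp
  have "R t > 1/3" using R_eq[of t] a_pos[rule_format, of t] CC_pos[of t] t(1) bb by auto
  then have X: "1 - R t - 2 * BB t < 0" using bb by simp
  have p: "b t * (8 * (1 + lam)) > 0" using b_pos t(1) lam by simp
  have "B' t = (b t * (8 * (1 + lam))) * (1 - R t - 2 * BB t)" using B'_eq[of t] by (simp add: mult.assoc)
  then show "B' t < 0" using mult_pos_neg[OF p X] by simp
qed

lemma c_bound: "\<forall>t\<ge>0. c t < 1 / (real d - 2)"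
proof (rule G4[OF Dc])
  have "rho0 * (real d - 2) < 1 * (real d - 2)"
    using r0 dpos by (intro mult_strict_right_mono) auto
  also have "\<dots> \<le> real d + lam" using lam by simp
  finally have "mu * (real d - 2) < 1" unfolding mu_def using dpos
    by (simp add: divide_less_eq)
  then show "c 0 < 1 / (real d - 2)" using init dpos by (simp add: less_divide_eq)
  fix t :: real assume t: "t > 0" "c t = 1 / (real d - 2)"
  have cc: "CC t = 1" unfolding CC_def using t dpos by simp
  have "R t > 1" using R_eq[of t] a_pos[rule_format, of t] BB_pos[of t] t(1) cc by auto
  moreover have ct: "c t > 0" using c_pos t(1) by simp
  ultimately have X: "1 - R t - 2 * c t < 0" by linarith
  have "C' t = c t * (8 * (1 - R t - 2 * c t))" by (rule C'_eq)
  then show "C' t < 0" using mult_pos_neg[OF ct] X by simp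
qed

lemma BB_lt: "t \<ge> 0 \<Longrightarrow> BB t < 1/3"
  using b_bound lam unfolding BB_def by (auto simp: field_simps)
lemma CC_lt: "t \<ge> 0 \<Longrightarrow> CC t < 1"
  using c_bound dpos unfolding CC_def by (auto simp: field_simps)
lemma c_lt1: "t \<ge> 0 \<Longrightarrow> c t < 1"
proof -
  assume t: "t \<ge> 0"
  have "1 / (real d - 2) \<le> 1" using dpos by simp
  moreover have "c t < 1 / (real d - 2)" using c_bound t by simp
  ultimately show ?thesis by linarith
qed
lemma R_lt: "t \<ge> 0 \<Longrightarrow> R t < 7/3"
proof -
  assume t: "t \<ge> 0"
  show ?thesis using R_eq[of t] a_lt1[rule_format, OF t] BB_lt[OF t] CC_lt[OF t] by linarith
qed
lemma R_pos: "t \<ge> 0 \<Longrightarrow> R t > 0"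
proof -
  assume t: "t \<ge> 0"
  show ?thesis using R_eq[of t] a_pos[rule_format, OF t] BB_pos[OF t] CC_pos[OF t] by linarith
qed

lemma A'_up: "t \<ge> 0 \<Longrightarrow> A' t \<le> 24 * a t"
proof -
  assume t: "t \<ge> 0"
  have ap: "a t > 0" using a_pos t by simp
  have "24 - 16 * a t - 8 * R t \<le> 24" using ap R_pos[OF t] by linarith
  then have "a t * (24 - 16 * a t - 8 * R t) \<le> a t * 24" using ap by (intro mult_left_mono) auto
  then show ?thesis using A'_eq[of t] by simp
qed

lemma A'_low: "t \<ge> 0 \<Longrightarrow> A' t \<ge> -12 * a t"
proof -
  assume t: "t \<ge> 0"
  have ap: "a t > 0" using a_pos t by simp
  have "24 - 16 * a t - 8 * R t \<ge> -12" using a_lt1[rule_format, OF t] R_lt[OF t] by linarith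
  then have "a t * (24 - 16 * a t - 8 * R t) \<ge> a t * (-12)" using ap by (intro mult_left_mono) auto
  then show ?thesis using A'_eq[of t] by simp
qed

lemma A'_grow: "t \<ge> 0 \<Longrightarrow> rho < 1/12 \<Longrightarrow> a t < rho \<Longrightarrow> A' t \<ge> 11 * a t"
proof -
  assume t: "t \<ge> 0" and rho: "rho < 1/12" "a t < rho"
  have ap: "a t > 0" using a_pos t by simp
  have "R t < rho + 4/3" using R_eq[of t] BB_lt[OF t] CC_lt[OF t] rho by linarith
  then have "24 - 16 * a t - 8 * R t \<ge> 11" using rho by linarith
  then have "a t * (24 - 16 * a t - 8 * R t) \<ge> a t * 11" using ap by (intro mult_left_mono) auto
  then show ?thesis using A'_eq[of t] by simp
qed

lemma C'_up: "t \<ge> 0 \<Longrightarrow> C' t \<le> 8 * c t"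
proof -
  assume t: "t \<ge> 0"
  have cp: "c t > 0" using c_pos t by simp
  have "8 * (1 - R t - 2 * c t) \<le> 8" using cp R_pos[OF t] by (simp add: algebra_simps)
  then have "c t * (8 * (1 - R t - 2 * c t)) \<le> c t * 8" using cp by (intro mult_left_mono) auto
  then show ?thesis using C'_eq[of t] by simp
qed

lemma C'_low: "t \<ge> 0 \<Longrightarrow> C' t \<ge> -27 * c t"
proof -
  assume t: "t \<ge> 0"
  have cp: "c t > 0" using c_pos t by simp
  have "8 * (1 - R t - 2 * c t) \<ge> -27" using c_lt1[OF t] R_lt[OF t] by (simp add: algebra_simps)
  then have "c t * (8 * (1 - R t - 2 * c t)) \<ge> c t * (-27)" using cp by (intro mult_left_mono) auto
  then show ?thesis using C'_eq[of t] by simp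
qed

lemma b_mono: assumes "0 \<le> s" "s \<le> t" "\<forall>u. s \<le> u \<and> u \<le> t \<longrightarrow> B' u > 0" shows "b s \<le> b t"
  by (rule G1[OF Db assms(1,2)]) (use assms(3) in \<open>auto intro: less_imp_le\<close>)

lemma a_upper: assumes "0 \<le> s" "s \<le> t" shows "a t \<le> a s * exp (24 * (t - s))"
proof (rule G3[OF Da assms])
  fix u assume "s \<le> u" "u \<le> t"
  then show "A' u \<le> 24 * a u" using assms by (intro A'_up) simp
qed
lemma a_lower: assumes "0 \<le> s" "s \<le> t" shows "a t \<ge> a s * exp ((-12) * (t - s))"
proof (rule G2[OF Da assms])
  fix u assume "s \<le> u" "u \<le> t"
  then show "(-12) * a u \<le> A' u" using assms by (intro A'_low) simp
qed
lemma c_upper: assumes "0 \<le> s" "s \<le> t" shows "c t \<le> c s * exp (8 * (t - s))"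
proof (rule G3[OF Dc assms])
  fix u assume "s \<le> u" "u \<le> t"
  then show "C' u \<le> 8 * c u" using assms by (intro C'_up) simp
qed
lemma c_lower: assumes "0 \<le> s" "s \<le> t" shows "c t \<ge> c s * exp ((-27) * (t - s))"
proof (rule G2[OF Dc assms])
  fix u assume "s \<le> u" "u \<le> t"
  then show "(-27) * c u \<le> C' u" using assms by (intro C'_low) simp
qed

lemma B'_pos_iff: "t \<ge> 0 \<Longrightarrow> B' t > 0 \<longleftrightarrow> 1 - R t - 2 * BB t > 0"
proof -
  assume t: "t \<ge> 0"
  have p: "b t * (8 * (1 + lam)) > 0" using b_pos t(1) lam by simp
  have "B' t = (b t * (8 * (1 + lam))) * (1 - R t - 2 * BB t)" using B'_eq[of t] by (simp add: mult.assoc)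
  then show ?thesis using p
    by (metis mult_pos_pos zero_less_mult_pos)
qed

lemma Lam_pos: assumes "CC 0 \<ge> exp (- Lam)" shows "Lam > 0"
proof -
  have "exp (- Lam) < 1" using assms CC_lt[OF order_refl] by linarith
  then show ?thesis by simp
qed

lemma bphase:
  assumes L: "L > 0" and h1: "mu * exp (24 * L) \<le> 1/16" and h2: "rho0 * exp (8 * L) \<le> 1/16"
    and h3: "mu * exp (4 * lam * L) \<ge> 1/8"
    and TL: "L \<le> T" and pos: "\<forall>u. 0 \<le> u \<and> u \<le> T \<longrightarrow> B' u > 0"
  shows "\<forall>u. L \<le> u \<and> u \<le> T \<longrightarrow> BB u \<ge> 1/8"
proof -
  have BL: "BB L \<ge> 1/8"
  proof (rule ccontr)
    assume "\<not> BB L \<ge> 1/8"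
    then have lt: "BB L < 1/8" by simp
    have "b L \<ge> b 0 * exp ((4 * lam) * (L - 0))"
    proof (rule G2[OF Db])
      fix u assume u: "0 \<le> u" "u \<le> L"
      have bu: "b u \<le> b L" by (rule b_mono) (use u pos TL in auto)
      have "BB u \<le> BB L" unfolding BB_def using bu lam by (intro mult_left_mono) auto
      then have BBu: "BB u < 1/8" using lt by simp
      have "a u \<le> a 0 * exp (24 * (u - 0))" by (rule a_upper) (use u in auto)
      also have "\<dots> \<le> mu * exp (24 * L)" using u init mu_pos by simp
      finally have au: "a u \<le> 1/16" using h1 by simp
      have "c u \<le> c 0 * exp (8 * (u - 0))" by (rule c_upper) (use u in auto)
      then have "CC u \<le> (real d - 2) * (c 0 * exp (8 * u))" unfolding CC_def using dpos
        by (intro mult_left_mono) auto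
      also have "\<dots> = CC 0 * exp (8 * u)" unfolding CC_def by simp
      also have "\<dots> \<le> rho0 * exp (8 * L)" using CC0_le u CC_pos[of 0]
        by (intro mult_mono) auto
      finally have CCu: "CC u \<le> 1/16" using h2 by simp
      have X: "1 - R u - 2 * BB u \<ge> 1/2" using R_eq[of u] au BBu CCu by linarith
      have "8 * (1 + lam) * (1/2) \<le> 8 * (1 + lam) * (1 - R u - 2 * BB u)"
        using X lam by (intro mult_left_mono) auto
      then have "4 * lam \<le> 8 * (1 + lam) * (1 - R u - 2 * BB u)" by simp
      then have "b u * (4 * lam) \<le> b u * (8 * (1 + lam) * (1 - R u - 2 * BB u))"
        using b_pos u by (intro mult_left_mono) auto
      then show "4 * lam * b u \<le> B' u" using B'_eq[of u] by (simp add: mult.commute)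
    qed (use L in auto)
    then have bL: "b L \<ge> 1/8" using h3 init by (simp add: mult.assoc)
    have "b L \<le> BB L" unfolding BB_def using b_pos L lam by simp
    then show False using bL lt by simp
  qed
  show ?thesis
  proof (intro allI impI)
    fix u assume u: "L \<le> u \<and> u \<le> T"
    have "b L \<le> b u" by (rule b_mono) (use u pos L in auto)
    then have "BB L \<le> BB u" unfolding BB_def using lam by (intro mult_left_mono) auto
    then show "BB u \<ge> 1/8" using BL by simp
  qed
qed

lemma E1:
  assumes L: "L > 0" and h1: "mu * exp (24 * L) \<le> 1/16" and h2: "rho0 * exp (8 * L) \<le> 1/16"
    and h3: "mu * exp (4 * lam * L) \<ge> 1/8" and d34: "real d \<ge> 34"
    and C0: "CC 0 \<ge> exp (- Lam)" and T_def: "T = 28 * L + Lam + 1"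
  shows "\<exists>t1. 0 \<le> t1 \<and> t1 \<le> T \<and> B' t1 \<le> 0"
proof (rule ccontr)
  assume "\<not> ?thesis"
  then have pos: "\<forall>u. 0 \<le> u \<and> u \<le> T \<longrightarrow> B' u > 0" by (metis not_le)
  have Lam: "Lam > 0" by (rule Lam_pos[OF C0])
  have TL: "L \<le> T" using T_def L Lam by simp
  have BBb: "\<forall>u. L \<le> u \<and> u \<le> T \<longrightarrow> BB u \<ge> 1/8" by (rule bphase[OF L h1 h2 h3 TL pos])
  have cL: "c L \<ge> c 0 * exp ((-27) * (L - 0))" by (rule c_lower) (use L in auto)
  have cT: "c T \<ge> c L * exp (1 * (T - L))"
  proof (rule G2[OF Dc])
    fix u assume u: "L \<le> u" "u \<le> T"
    have u0: "u \<ge> 0" using u L by simp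
    have X: "1 - R u - 2 * BB u > 0" using B'_pos_iff[OF u0] pos u u0 by auto
    have "1 / (real d - 2) \<le> 1 / 32" using d34 by (simp add: divide_le_eq)
    moreover have "c u < 1 / (real d - 2)" using c_bound u0 by simp
    ultimately have cu: "c u \<le> 1/32" by linarith
    have "BB u \<ge> 1/8" using BBb u by simp
    then have "1 - R u - 2 * c u \<ge> 3/16" using X cu by linarith
    then have "8 * (1 - R u - 2 * c u) \<ge> 1" by simp
    then have "c u * 1 \<le> c u * (8 * (1 - R u - 2 * c u))" using c_pos u0 by (intro mult_left_mono) auto
    then show "1 * c u \<le> C' u" using C'_eq[of u] by simp
  qed (use L TL in auto)
  have "c L * exp (1 * (T - L)) \<ge> c 0 * exp ((-27) * (L - 0)) * exp (1 * (T - L))"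
    by (rule mult_right_mono[OF cL]) simp
  with cT have "c T \<ge> c 0 * exp ((-27) * (L - 0)) * exp (1 * (T - L))" by linarith
  also have "c 0 * exp ((-27) * (L - 0)) * exp (1 * (T - L)) = c 0 * exp (Lam + 1)"
  proof -
    have "(-27) * (L - 0) + 1 * (T - L) = Lam + 1" unfolding T_def by simp
    then have "exp ((-27) * (L - 0)) * exp (1 * (T - L)) = exp (Lam + 1)" by (metis exp_add)
    then show ?thesis by (simp only: mult.assoc)
  qed
  finally have cc: "c T \<ge> c 0 * exp (Lam + 1)" .
  have "CC T \<ge> CC 0 * exp (Lam + 1)" unfolding CC_def mult.assoc
    by (rule mult_left_mono[OF cc]) (use dpos in simp)
  moreover have "CC 0 * exp (Lam + 1) \<ge> exp (- Lam) * exp (Lam + 1)"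
    using C0 by (intro mult_right_mono) auto
  moreover have "exp (- Lam) * exp (Lam + 1) = exp 1"
    by (metis exp_add add.commute add_diff_cancel_left' diff_add_cancel add_uminus_conv_diff)
  moreover have "exp (1::real) > 1" by simp
  ultimately have "CC T > 1" by linarith
  then show False using CC_lt[of T] TL L by simp
qed

lemma E2:
  assumes eps: "0 < eps" and deps: "real d \<ge> 2 + 4 / eps" and t1: "0 \<le> t1"
    and C0: "CC 0 \<ge> exp (- Lam)" and T_def: "T' = t1 + (27 * t1 + Lam + 1) / (4 * eps)"
  shows "\<exists>t2. t1 \<le> t2 \<and> t2 \<le> T' \<and> R t2 \<ge> 1 - eps"
proof (rule ccontr)
  assume "\<not> ?thesis"
  then have low: "\<forall>u. t1 \<le> u \<and> u \<le> T' \<longrightarrow> R u < 1 - eps" by (metis not_le)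
  have Lam: "Lam > 0" by (rule Lam_pos[OF C0])
  have TL: "t1 \<le> T'" using T_def t1 Lam eps by simp
  have c1: "c t1 \<ge> c 0 * exp ((-27) * (t1 - 0))" by (rule c_lower) (use t1 in auto)
  have cT: "c T' \<ge> c t1 * exp ((4 * eps) * (T' - t1))"
  proof (rule G2[OF Dc])
    fix u assume u: "t1 \<le> u" "u \<le> T'"
    have u0: "u \<ge> 0" using u t1 by simp
    have "4 / eps \<le> real d - 2" using deps by simp
    then have "4 \<le> (real d - 2) * eps" using eps by (simp add: divide_le_eq)
    then have "1 / (real d - 2) \<le> eps / 4" using eps dpos by (simp add: divide_le_eq field_simps)
    moreover have "c u < 1 / (real d - 2)" using c_bound u0 by simp
    ultimately have cu: "c u \<le> eps / 4" by linarith
    have "R u < 1 - eps" using low u by simp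
    then have "1 - R u - 2 * c u \<ge> eps / 2" using cu by linarith
    then have "8 * (1 - R u - 2 * c u) \<ge> 4 * eps" by simp
    then have "c u * (4 * eps) \<le> c u * (8 * (1 - R u - 2 * c u))" using c_pos u0 by (intro mult_left_mono) auto
    then show "4 * eps * c u \<le> C' u" using C'_eq[of u] by (simp add: mult.commute)
  qed (use t1 TL in auto)
  have "c t1 * exp ((4 * eps) * (T' - t1)) \<ge> c 0 * exp ((-27) * (t1 - 0)) * exp ((4 * eps) * (T' - t1))"
    by (rule mult_right_mono[OF c1]) simp
  with cT have "c T' \<ge> c 0 * exp ((-27) * (t1 - 0)) * exp ((4 * eps) * (T' - t1))" by linarith
  moreover have eqE: "(4 * eps) * (T' - t1) = 27 * t1 + Lam + 1" unfolding T_def using eps by simp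
  ultimately have "c T' \<ge> c 0 * exp ((-27) * (t1 - 0)) * exp (27 * t1 + Lam + 1)" by (simp only: eqE)
  also have "c 0 * exp ((-27) * (t1 - 0)) * exp (27 * t1 + Lam + 1) = c 0 * exp (Lam + 1)"
  proof -
    have "(-27) * (t1 - 0) + (27 * t1 + Lam + 1) = Lam + 1" by simp
    then have "exp ((-27) * (t1 - 0)) * exp (27 * t1 + Lam + 1) = exp (Lam + 1)" by (metis exp_add)
    then show ?thesis by (simp only: mult.assoc)
  qed
  finally have cc: "c T' \<ge> c 0 * exp (Lam + 1)" .
  have "CC T' \<ge> CC 0 * exp (Lam + 1)" unfolding CC_def mult.assoc
    by (rule mult_left_mono[OF cc]) (use dpos in simp)
  moreover have "CC 0 * exp (Lam + 1) \<ge> exp (- Lam) * exp (Lam + 1)"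
    using C0 by (intro mult_right_mono) auto
  moreover have "exp (- Lam) * exp (Lam + 1) = exp 1"
    by (metis exp_add add.commute add_diff_cancel_left' diff_add_cancel add_uminus_conv_diff)
  moreover have "exp (1::real) > 1" by simp
  ultimately have "CC T' > 1" by linarith
  then show False using CC_lt[of T'] TL t1 by simp
qed

end



lemma align_est:
  fixes x s rho :: real
  assumes r: "0 < rho" "rho \<le> x" and s: "0 \<le> s"
  shows "0 \<le> 1 - x / sqrt (x^2 + s) \<and> 1 - x / sqrt (x^2 + s) \<le> s / rho^2"
proof -
  define q where "q = sqrt (x^2 + s)"
  have x0: "x > 0" using r by simp
  have "sqrt (x^2) \<le> q" unfolding q_def using s by (intro real_sqrt_le_mono) simp
  then have qx: "x \<le> q" using x0 by simp
  have q0: "q > 0" using qx x0 by simp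
  have nn: "0 \<le> x^2 + s" using s by simp
  have qsq: "q * q = x^2 + s" unfolding q_def using nn by simp
  have "x / q \<le> 1" using qx q0 by simp
  then have A: "0 \<le> 1 - x / q" by simp
  have "(q - x) * x \<le> (q - x) * (q + x)" using qx x0 by (intro mult_left_mono) auto
  also have "\<dots> = s" using qsq by (simp add: algebra_simps power2_eq_square)
  finally have "q - x \<le> s / x" using x0 by (simp add: le_divide_eq)
  have "1 - x / q = (q - x) / q" using q0 by (simp add: field_simps)
  also have "\<dots> \<le> (q - x) / x" using qx x0 by (intro divide_left_mono) auto
  also have "\<dots> \<le> (s / x) / x" using \<open>q - x \<le> s / x\<close> x0 by (intro divide_right_mono) auto
  also have "\<dots> = s / x^2" by (simp add: power2_eq_square)
  also have "\<dots> \<le> s / rho^2" using r s by (intro divide_left_mono power_mono mult_pos_pos) auto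
  finally show ?thesis using A unfolding q_def by simp
qed

context sys begin

lemma main_fixed:
  assumes rho: "0 < rho" "rho < 1/12" and eps: "0 < eps" "eps \<le> 1/4"
    and L: "L > 0" and h1: "mu * exp (24 * L) \<le> 1/16" and h2: "rho0 * exp (8 * L) \<le> 1/16"
    and h3: "mu * exp (4 * lam * L) \<ge> 1/8" and d34: "real d \<ge> 34" and deps: "real d \<ge> 2 + 4 / eps"
    and C0: "CC 0 \<ge> exp (- Lam)"
    and Tm_def: "Tm = (28 * L + Lam + 1) + (27 * (28 * L + Lam + 1) + Lam + 1) / (4 * eps)"
    and small: "mu * exp (24 * Tm) < rho"
  defines "S2a \<equiv> T2a lam d rho eps a b c" and "S2 \<equiv> T2 lam d rho eps a b c"
  shows "0 \<le> S2a \<and> S2a \<le> Tm \<and> mu * exp (-12 * Tm) \<le> a S2a \<and> a S2a \<le> mu * exp (24 * Tm)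
     \<and> ln (rho / a S2a) / 24 \<le> S2 - S2a \<and> S2 - S2a \<le> ln (rho / a S2a) / 11
     \<and> 0 \<le> 1 - align d (a S2) (b S2) (c S2)
     \<and> 1 - align d (a S2) (b S2) (c S2) \<le> (1 / (9 * (1 + lam)^2) + 1 / (real d - 2)) / rho^2"
proof -
  define T where "T = 28 * L + Lam + 1"
  have Lam: "Lam > 0" by (rule Lam_pos[OF C0])
  obtain t1 where t1: "0 \<le> t1" "t1 \<le> T" "B' t1 \<le> 0"
    using E1[OF L h1 h2 h3 d34 C0 T_def] by blast
  define T' where "T' = t1 + (27 * t1 + Lam + 1) / (4 * eps)"
  obtain t2 where t2: "t1 \<le> t2" "t2 \<le> T'" "R t2 \<ge> 1 - eps"
    using E2[OF eps(1) deps t1(1) C0 T'_def] by blast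
  have "(27 * t1 + Lam + 1) / (4 * eps) \<le> (27 * T + Lam + 1) / (4 * eps)"
    using t1 eps by (intro divide_right_mono) auto
  then have T'Tm: "T' \<le> Tm" unfolding T'_def Tm_def T_def[symmetric] using t1 by simp
  have "\<not> B' t1 > 0" using t1 by simp
  then have "1 - R t1 - 2 * BB t1 \<le> 0" using B'_pos_iff[OF t1(1)] by simp
  then have Rt1: "R t1 \<ge> rho" using BB_lt[OF t1(1)] rho by simp
  define X1 where "X1 = {t. t \<ge> 0 \<and> rr lam d (a t) (b t) (c t) \<ge> rho}"
  have t1X1: "t1 \<in> X1" unfolding X1_def using t1 Rt1 unfolding R_def by simp
  have bX1: "bdd_below X1" unfolding X1_def by (rule bdd_belowI[of _ 0]) auto
  have T1a_eq: "T1a lam d rho a b c = Inf X1" unfolding T1a_def X1_def ..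
  have T1a_ge: "T1a lam d rho a b c \<ge> 0" unfolding T1a_eq
    by (rule cInf_greatest) (use t1X1 in \<open>auto simp: X1_def\<close>)
  have T1a_le: "T1a lam d rho a b c \<le> t1" unfolding T1a_eq by (rule cInf_lower[OF t1X1 bX1])
  define X2 where "X2 = {t. t \<ge> T1a lam d rho a b c \<and> bdot lam d (a t) (b t) (c t) \<le> 0}"
  have t1X2: "t1 \<in> X2" unfolding X2_def using t1 T1a_le unfolding B'_def by simp
  have bX2: "bdd_below X2" unfolding X2_def by (rule bdd_belowI[of _ "T1a lam d rho a b c"]) auto
  have T1_eq: "T1 lam d rho a b c = Inf X2" unfolding T1_def X2_def ..
  have T1_ge: "T1 lam d rho a b c \<ge> T1a lam d rho a b c" unfolding T1_eq
    by (rule cInf_greatest) (use t1X2 in \<open>auto simp: X2_def\<close>)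
  have T1_le: "T1 lam d rho a b c \<le> t1" unfolding T1_eq by (rule cInf_lower[OF t1X2 bX2])
  define X3 where "X3 = {t. t \<ge> T1 lam d rho a b c \<and> rr lam d (a t) (b t) (c t) \<ge> 1 - eps}"
  have t2X3: "t2 \<in> X3" unfolding X3_def using t2 t1 T1_le unfolding R_def by simp
  have bX3: "bdd_below X3" unfolding X3_def by (rule bdd_belowI[of _ "T1 lam d rho a b c"]) auto
  have T2a_eq: "S2a = Inf X3" unfolding S2a_def T2a_def X3_def ..
  have S2a_ge: "S2a \<ge> T1 lam d rho a b c" unfolding T2a_eq
    by (rule cInf_greatest) (use t2X3 in \<open>auto simp: X3_def\<close>)
  have S2a_le: "S2a \<le> t2" unfolding T2a_eq by (rule cInf_lower[OF t2X3 bX3])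
  have S0: "0 \<le> S2a" using S2a_ge T1_ge T1a_ge by simp
  have STm: "S2a \<le> Tm" using S2a_le t2 T'Tm by simp
  define A0 where "A0 = a S2a"
  have "A0 \<le> a 0 * exp (24 * (S2a - 0))" unfolding A0_def by (rule a_upper) (use S0 in auto)
  also have "\<dots> \<le> mu * exp (24 * Tm)" using STm init mu_pos by simp
  finally have A0up: "A0 \<le> mu * exp (24 * Tm)" .
  have "a 0 * exp ((-12) * (S2a - 0)) \<le> A0" unfolding A0_def by (rule a_lower) (use S0 in auto)
  moreover have "mu * exp (-12 * Tm) \<le> a 0 * exp ((-12) * (S2a - 0))" using STm init mu_pos by simp
  ultimately have A0low: "mu * exp (-12 * Tm) \<le> A0" by simp
  have A0pos: "A0 > 0" unfolding A0_def using a_pos S0 by simp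
  have A0rho: "A0 < rho" using A0up small by simp
  define tau where "tau = ln (rho / A0) / 11"
  have tau0: "tau > 0" unfolding tau_def using A0pos A0rho by simp
  have ex3: "\<exists>t. S2a \<le> t \<and> t \<le> S2a + tau \<and> a t \<ge> rho"
  proof (rule ccontr)
    assume "\<not> ?thesis"
    then have lt: "\<forall>t. S2a \<le> t \<and> t \<le> S2a + tau \<longrightarrow> a t < rho" by (metis not_le)
    have "a (S2a + tau) \<ge> a S2a * exp (11 * (S2a + tau - S2a))"
    proof (rule G2[OF Da])
      fix u assume u: "S2a \<le> u" "u \<le> S2a + tau"
      show "11 * a u \<le> A' u" using A'_grow[of u rho] u S0 lt rho by simp
    qed (use S0 tau0 in auto)
    also have "a S2a * exp (11 * (S2a + tau - S2a)) = rho"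
      unfolding tau_def A0_def[symmetric] using A0pos A0rho by simp
    finally have "rho \<le> a (S2a + tau)" .
    moreover have "a (S2a + tau) < rho" using lt tau0 by simp
    ultimately show False by simp
  qed
  then obtain t3 where t3: "S2a \<le> t3" "t3 \<le> S2a + tau" "a t3 \<ge> rho" by blast
  define X4 where "X4 = {t. t \<ge> S2a \<and> a t \<ge> rho}"
  have t3X4: "t3 \<in> X4" unfolding X4_def using t3 by simp
  have bX4: "bdd_below X4" unfolding X4_def by (rule bdd_belowI[of _ S2a]) auto
  have cont4: "continuous_on {S2a..} a" using der_cont[OF Da] by (rule continuous_on_subset) (use S0 in auto)
  have "closed ({S2a..} \<inter> a -` {rho..})" by (rule continuous_closed_preimage[OF cont4]) auto
  moreover have "X4 = {S2a..} \<inter> a -` {rho..}" unfolding X4_def by auto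
  ultimately have clX4: "closed X4" by simp
  have T2_eq: "S2 = Inf X4" unfolding S2_def T2_def X4_def S2a_def ..
  have S2X4: "S2 \<in> X4" unfolding T2_eq using closed_contains_Inf[OF _ bX4 clX4] t3X4 by blast
  then have S2ge: "S2 \<ge> S2a" "a S2 \<ge> rho" unfolding X4_def by auto
  have S2le: "S2 \<le> t3" unfolding T2_eq by (rule cInf_lower[OF t3X4 bX4])
  have upD: "S2 - S2a \<le> ln (rho / A0) / 11" using S2le t3 unfolding tau_def by simp
  have "rho \<le> a S2" by (rule S2ge)
  also have "a S2 \<le> A0 * exp (24 * (S2 - S2a))" unfolding A0_def by (rule a_upper) (use S0 S2ge in auto)
  finally have "rho / A0 \<le> exp (24 * (S2 - S2a))" using A0pos by (simp add: divide_le_eq mult.commute)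
  then have "ln (rho / A0) \<le> ln (exp (24 * (S2 - S2a)))" using A0pos rho by (subst ln_le_cancel_iff) auto
  then have "ln (rho / A0) \<le> 24 * (S2 - S2a)" by simp
  then have lowD: "ln (rho / A0) / 24 \<le> S2 - S2a" by simp
  have S2_0: "S2 \<ge> 0" using S0 S2ge by simp
  define s where "s = (b S2)^2 + (real d - 2) * (c S2)^2"
  have s0: "s \<ge> 0" unfolding s_def using dpos by simp
  have "b S2 < 1 / (3 * (1 + lam))" using b_bound S2_0 by simp
  then have "(b S2)^2 \<le> (1 / (3 * (1 + lam)))^2" using b_pos S2_0 by (intro power_mono) auto
  moreover have "(1 / (3 * (1 + lam)))^2 = 1 / (9 * (1 + lam)^2)"
    by (simp only: power_divide power_mult_distrib) simp
  ultimately have bs: "(b S2)^2 \<le> 1 / (9 * (1 + lam)^2)" by (rule ord_le_eq_trans)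
  have "(real d - 2) * (c S2)^2 = CC S2 * c S2" unfolding CC_def by (simp add: power2_eq_square)
  also have "\<dots> \<le> 1 * c S2" using CC_lt[OF S2_0] c_pos S2_0 by (intro mult_right_mono) auto
  also have "\<dots> \<le> 1 / (real d - 2)" using c_bound[rule_format, OF S2_0] by simp
  finally have cs: "(real d - 2) * (c S2)^2 \<le> 1 / (real d - 2)" .
  have sle: "s \<le> 1 / (9 * (1 + lam)^2) + 1 / (real d - 2)" unfolding s_def using bs cs by simp
  have al: "align d (a S2) (b S2) (c S2) = a S2 / sqrt ((a S2)^2 + s)"
    unfolding align_def s_def by (simp add: add.assoc)
  have est: "0 \<le> 1 - a S2 / sqrt ((a S2)^2 + s) \<and> 1 - a S2 / sqrt ((a S2)^2 + s) \<le> s / rho^2"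
    by (rule align_est[OF rho(1) S2ge(2) s0])
  have "s / rho^2 \<le> (1 / (9 * (1 + lam)^2) + 1 / (real d - 2)) / rho^2"
    using sle rho by (intro divide_right_mono) auto
  then show ?thesis using S0 STm A0low A0up lowD upD est al unfolding A0_def by auto
qed

end



context
  fixes c0 kap Ku eps rho K1 K2 :: real
  assumes pos: "c0 > 0" "kap > 0" "Ku > 0" "eps > 0" "rho > 0" "K2 > 0"
begin
lemma a1: "eventually (\<lambda>x::real. ln x powr (-c0) < 1/3) at_top" using pos by real_asymp
lemma a2: "eventually (\<lambda>x::real. ln x powr (-c0) * exp (24 * (1/kap)) \<le> 1/16) at_top" using pos by real_asymp
lemma a3: "eventually (\<lambda>x::real. ln x powr (-c0) * exp (8 * (1/kap)) \<le> 1/16) at_top" using pos by real_asymp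
lemma a4: "eventually (\<lambda>x::real. ln x powr (-c0) * x^3 \<ge> (1 + Ku) / 8) at_top" using pos by real_asymp
lemma a5: "eventually (\<lambda>x::real. x \<ge> 34) at_top" by real_asymp
lemma a5b: "eventually (\<lambda>x::real. x \<ge> 2 + 4 / eps) at_top" by real_asymp
lemma a6: "eventually (\<lambda>x::real. exp (24 * (K1 + K2 * ln (ln x))) / x < rho) at_top" using pos by real_asymp
lemma a7: "eventually (\<lambda>x::real. ln x - 24 * (K1 + K2 * ln (ln x)) \<ge> ln x / 2) at_top" using pos by real_asymp
lemma a8: "eventually (\<lambda>x::real. ln (1 + Ku) + ln x + c0 * ln (ln x) + 12 * (K1 + K2 * ln (ln x)) \<le> 2 * ln x) at_top" using pos by real_asymp
lemma a9: "eventually (\<lambda>x::real. ln x \<ge> 4 * ln (1 / rho)) at_top" by real_asymp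
lemma a10: "e > 0 \<Longrightarrow> eventually (\<lambda>x::real. (1 / (9 * kap^2 * (ln x)^2) + 1 / (x - 2)) / rho^2 \<le> e) at_top"
  using pos by real_asymp
end



lemma ev_nat: "eventually P (at_top::real filter) \<Longrightarrow> eventually (\<lambda>n::nat. P (real n)) at_top"
  using filterlim_real_sequentially unfolding filterlim_iff by blast

lemma perd:
  fixes lam kap Ku c0 rho eps x r0 K1 K2 :: real and d :: nat and a b c :: "real \<Rightarrow> real"
  assumes x_def: "x = real d" and r0_def: "r0 = ln x powr (-c0)"
    and K1_def: "K1 = (28 / kap + 1) * (1 + 27 / (4 * eps)) + 1 / (4 * eps) + ln (3 * (1 + Ku)) * (1 + 7 / eps)"
    and K2_def: "K2 = c0 * (1 + 7 / eps)" and c0: "c0 > 0"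
    and d3: "d \<ge> 3" and lam: "lam > 0" and kap: "kap > 0" and Ku: "Ku > 0"
    and lamlo: "kap * ln x \<le> lam" and lamhi: "lam \<le> Ku * x"
    and rho: "0 < rho" "rho < 1/12" and eps: "0 < eps" "eps \<le> 1/4"
    and sol: "is_sol lam d (r0 / (real d + lam)) a b c"
    and P1: "r0 < 1/3"
    and P2: "r0 * exp (24 * (1/kap)) \<le> 1/16"
    and P3: "r0 * exp (8 * (1/kap)) \<le> 1/16"
    and P4: "r0 * x^3 \<ge> (1 + Ku) / 8"
    and P5: "x \<ge> 34" "x \<ge> 2 + 4/eps"
    and P6': "exp (24 * (K1 + K2 * ln (ln x))) / x < rho"
    and P7': "ln x - 24 * (K1 + K2 * ln (ln x)) \<ge> ln x / 2"
    and P8': "ln (1 + Ku) + ln x + c0 * ln (ln x) + 12 * (K1 + K2 * ln (ln x)) \<le> 2 * ln x"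
    and P9: "ln x \<ge> 4 * ln (1/rho)"
  shows "ln x / 96 \<le> T2 lam d rho eps a b c - T2a lam d rho eps a b c
    \<and> T2 lam d rho eps a b c - T2a lam d rho eps a b c \<le> 2 * ln x / 11
    \<and> ln (1 / a (T2a lam d rho eps a b c)) / 48 \<le> T2 lam d rho eps a b c - T2a lam d rho eps a b c
    \<and> T2 lam d rho eps a b c - T2a lam d rho eps a b c \<le> ln (1 / a (T2a lam d rho eps a b c)) / 11
    \<and> ln (1 / a (T2a lam d rho eps a b c)) \<ge> 0
    \<and> \<bar>1 - align d (a (T2 lam d rho eps a b c)) (b (T2 lam d rho eps a b c)) (c (T2 lam d rho eps a b c))\<bar>
        \<le> (1 / (9 * kap^2 * (ln x)^2) + 1 / (x - 2)) / rho^2"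
proof -
  have x3: "x \<ge> 3" using d3 x_def by simp
  have lnx: "ln x > 0" using x3 by simp
  have r0pos: "r0 > 0" unfolding r0_def using lnx by simp
  have lnr0: "ln r0 = - c0 * ln (ln x)" unfolding r0_def using lnx by (simp add: ln_powr)
  define Lm where "Lm = ln (3 * (1 + Ku) / r0)"
  define Tm where "Tm = (28 * (1/kap) + Lm + 1) + (27 * (28 * (1/kap) + Lm + 1) + Lm + 1) / (4 * eps)"
  have Lm_eq: "Lm = ln (3 * (1 + Ku)) + c0 * ln (ln x)"
    unfolding Lm_def using r0pos Ku lnr0 by (simp add: ln_div)
  have Tm_eq: "Tm = K1 + K2 * ln (ln x)"
    unfolding Tm_def K1_def K2_def Lm_eq using eps kap by (simp add: field_simps)
  have P6: "exp (24 * Tm) / x < rho" using P6' Tm_eq by simp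
  have P7: "ln x - 24 * Tm \<ge> ln x / 2" using P7' Tm_eq by simp
  have "ln ((1 + Ku) * x / r0) = ln (1 + Ku) + ln x + c0 * ln (ln x)"
    using Ku x3 r0pos lnr0 by (simp add: ln_div ln_mult)
  then have P8: "ln ((1 + Ku) * x / r0) + 12 * Tm \<le> 2 * ln x" using P8' Tm_eq by simp
  interpret sys lam d r0 a b c
    by unfold_locales (use d3 lam r0pos P1 sol in auto)
  define L where "L = 1 / kap"
  have L: "L > 0" unfolding L_def using kap by simp
  have h1: "mu * exp (24 * L) \<le> 1/16"
    using mu_le P2 unfolding L_def by (smt (verit) exp_gt_zero mult_right_mono)
  have h2: "r0 * exp (8 * L) \<le> 1/16" using P3 unfolding L_def .
  have xl: "real d + lam \<le> (1 + Ku) * x" using lamhi x_def by (simp add: algebra_simps)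
  have mulow: "mu \<ge> r0 / ((1 + Ku) * x)"
    unfolding mu_def using xl r0pos dpos by (intro divide_left_mono) auto
  have "lam * L \<ge> ln x" unfolding L_def using lamlo kap by (simp add: field_simps)
  then have "exp (4 * lam * L) \<ge> exp (4 * ln x)" by simp
  moreover have "exp (4 * ln x) = x ^ 4"
  proof -
    have "x powr 4 = exp (4 * ln x)" using x3 by (simp add: powr_def)
    moreover have "x powr 4 = x ^ 4" using x3 by (simp add: powr_numeral)
    ultimately show ?thesis by simp
  qed
  ultimately have ex4: "exp (4 * lam * L) \<ge> x ^ 4" by simp
  have "mu * exp (4 * lam * L) \<ge> r0 / ((1 + Ku) * x) * x ^ 4"
    using mulow ex4 r0pos Ku x3 mu_pos by (intro mult_mono) auto
  moreover have "r0 / ((1 + Ku) * x) * x ^ 4 = r0 * x^3 / (1 + Ku)"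
  proof -
    have "x ^ 4 = x ^ 3 * x" by (simp add: eval_nat_numeral)
    then have "r0 / ((1 + Ku) * x) * x ^ 4 = (r0 * x ^ 3 * x) / ((1 + Ku) * x)" by simp
    also have "\<dots> = r0 * x ^ 3 / (1 + Ku)" using x3 by (rule_tac mult_divide_mult_cancel_right) auto
    finally show ?thesis .
  qed
  moreover have "1/8 \<le> r0 * x^3 / (1 + Ku)" using P4 Ku by (simp add: le_divide_eq)
  ultimately have h3: "mu * exp (4 * lam * L) \<ge> 1/8" by linarith
  have d34: "real d \<ge> 34" and deps: "real d \<ge> 2 + 4 / eps" using P5 x_def by auto
  have C0: "CC 0 \<ge> exp (- Lm)"
  proof -
    have "exp Lm = 3 * (1 + Ku) / r0" unfolding Lm_def using r0pos Ku by simp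
    then have e: "exp (- Lm) = r0 / (3 * (1 + Ku))" by (simp add: exp_minus)
    have "(1 + Ku) * x \<le> (1 + Ku) * (3 * (x - 2))" using x3 Ku by (intro mult_left_mono) auto
    moreover have "3 * (1 + Ku) * (x - 2) = (1 + Ku) * (3 * (x - 2))" by (simp add: algebra_simps)
    ultimately have xl3: "x + lam \<le> 3 * (1 + Ku) * (x - 2)" using xl x_def by linarith
    have xlpos: "x + lam > 0" using x3 lam by simp
    have "(x + lam) / (3 * (1 + Ku)) \<le> x - 2" using xl3 Ku by (simp add: divide_le_eq mult.commute)
    then have "r0 * ((x + lam) / (3 * (1 + Ku))) \<le> r0 * (x - 2)" using r0pos by (intro mult_left_mono) auto
    then have "r0 / (3 * (1 + Ku)) * (x + lam) \<le> (x - 2) * r0" by (simp add: mult.commute)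
    then have "r0 / (3 * (1 + Ku)) \<le> (x - 2) * r0 / (x + lam)" using xlpos by (simp add: le_divide_eq)
    then show ?thesis unfolding e CC0 mu_def x_def by simp
  qed
  have mu1: "mu \<le> 1 / x"
  proof -
    have "mu \<le> r0 / x" unfolding mu_def x_def using r0pos lam x3 x_def by (intro divide_left_mono) auto
    also have "\<dots> \<le> 1 / x" using P1 x3 by (intro divide_right_mono) auto
    finally show ?thesis .
  qed
  have small: "mu * exp (24 * Tm) < rho"
  proof -
    have "mu * exp (24 * Tm) \<le> 1 / x * exp (24 * Tm)" using mu1 by (intro mult_right_mono) auto
    then show ?thesis using P6 by simp
  qed
  have Tm': "Tm = (28 * L + Lm + 1) + (27 * (28 * L + Lm + 1) + Lm + 1) / (4 * eps)"
    unfolding Tm_def L_def by simp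
  note M = main_fixed[OF rho eps L h1 h2 h3 d34 deps C0 Tm' small]
  define A where "A = a (T2a lam d rho eps a b c)"
  define D where "D = T2 lam d rho eps a b c - T2a lam d rho eps a b c"
  have Apos: "A > 0" unfolding A_def using M a_pos by auto
  have Aup: "A \<le> exp (24 * Tm) / x"
  proof -
    have "mu * exp (24 * Tm) \<le> 1 / x * exp (24 * Tm)" using mu1 by (intro mult_right_mono) auto
    then show ?thesis using M unfolding A_def by simp
  qed
  have Alow: "A \<ge> r0 / ((1 + Ku) * x) * exp (-12 * Tm)"
  proof -
    have "r0 / ((1 + Ku) * x) * exp (-12 * Tm) \<le> mu * exp (-12 * Tm)"
      using mulow by (intro mult_right_mono) auto
    then show ?thesis using M unfolding A_def by simp
  qed
  define l where "l = ln (1 / A)"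
  have l_eq: "l = - ln A" unfolding l_def using Apos by (simp add: ln_div)
  have "ln A \<le> ln (exp (24 * Tm) / x)" using Apos Aup x3 by simp
  also have "\<dots> = 24 * Tm - ln x" using x3 by (simp add: ln_div)
  finally have l_low: "l \<ge> ln x / 2" using P7 l_eq by simp
  have "ln (r0 / ((1 + Ku) * x) * exp (-12 * Tm)) \<le> ln A"
    using Apos Alow r0pos Ku x3 by (subst ln_le_cancel_iff) auto
  moreover have "ln (r0 / ((1 + Ku) * x) * exp (-12 * Tm)) = - ln ((1 + Ku) * x / r0) - 12 * Tm"
    using r0pos Ku x3 by (simp add: ln_mult ln_div)
  ultimately have l_up: "l \<le> 2 * ln x" using P8 l_eq by simp
  have lnr: "ln (rho / A) = ln rho + l" unfolding l_eq using rho Apos by (simp add: ln_div)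
  have "ln (1 / rho) = - ln rho" using rho by (simp add: ln_div)
  then have lr1: "ln rho \<ge> - l / 2" using P9 l_low by simp
  have lr2: "ln rho < 0" using rho by simp
  have D1: "ln (rho / A) / 24 \<le> D" "D \<le> ln (rho / A) / 11" using M unfolding A_def D_def by auto
  have D2: "l / 48 \<le> D" using D1 lnr lr1 by simp
  have D3: "D \<le> l / 11" using D1 lnr lr2 by simp
  have al: "0 \<le> 1 - align d (a (T2 lam d rho eps a b c)) (b (T2 lam d rho eps a b c)) (c (T2 lam d rho eps a b c))"
     "1 - align d (a (T2 lam d rho eps a b c)) (b (T2 lam d rho eps a b c)) (c (T2 lam d rho eps a b c))
        \<le> (1 / (9 * (1 + lam)^2) + 1 / (real d - 2)) / rho^2" using M by auto
  have "(kap * ln x)^2 \<le> (1 + lam)^2" using lamlo kap lnx lam by (intro power_mono) auto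
  then have "9 * kap^2 * (ln x)^2 \<le> 9 * (1 + lam)^2" by (simp add: power_mult_distrib)
  moreover have p1: "0 < 9 * kap^2 * (ln x)^2" using kap lnx by simp
  moreover have p2: "0 < 9 * (1 + lam)^2" using lam by simp
  ultimately have "1 / (9 * (1 + lam)^2) \<le> 1 / (9 * kap^2 * (ln x)^2)"
    by (intro divide_left_mono mult_pos_pos) auto
  then have "1 / (9 * (1 + lam)^2) + 1 / (real d - 2) \<le> 1 / (9 * kap^2 * (ln x)^2) + 1 / (x - 2)"
    using x_def by simp
  then have fin: "(1 / (9 * (1 + lam)^2) + 1 / (real d - 2)) / rho^2 \<le> (1 / (9 * kap^2 * (ln x)^2) + 1 / (x - 2)) / rho^2"
    using rho by (intro divide_right_mono) auto
  have ab: "\<bar>1 - align d (a (T2 lam d rho eps a b c)) (b (T2 lam d rho eps a b c)) (c (T2 lam d rho eps a b c))\<bar>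
        \<le> (1 / (9 * kap^2 * (ln x)^2) + 1 / (x - 2)) / rho^2"
    using al fin by linarith
  have l0: "l \<ge> 0" using l_low lnx by simp
  have "ln x / 96 \<le> D" using D2 l_low by simp
  moreover have "D \<le> 2 * ln x / 11" using D3 l_up by simp
  ultimately show ?thesis using ab D2 D3 l0 unfolding D_def l_def A_def by blast
qed

theorem propositionB6:
  fixes c0 \<rho> \<epsilon> :: real
    and lam :: "nat \<Rightarrow> real"
    and a b c :: "nat \<Rightarrow> real \<Rightarrow> real"
  assumes c0_pos: "c0 > 0"
    and rho: "0 < \<rho>" "\<rho> < 1/12"
    and eps: "0 < \<epsilon>" "\<epsilon> \<le> 1/4"
    and lam_pos: "\<forall>d\<ge>3. lam d > 0"
    and lam_lower: "lam \<in> \<Omega>(\<lambda>d. ln (real d))"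
    and lam_upper: "lam \<in> O(\<lambda>d. real d)"
    and sol: "\<forall>d\<ge>3. is_sol (lam d) d (ln (real d) powr (- c0) / (real d + lam d)) (a d) (b d) (c d)"
  shows "(\<lambda>d. T2 (lam d) d \<rho> \<epsilon> (a d) (b d) (c d) - T2a (lam d) d \<rho> \<epsilon> (a d) (b d) (c d))
            \<in> \<Theta>(\<lambda>d. ln (1 / a d (T2a (lam d) d \<rho> \<epsilon> (a d) (b d) (c d))))
      \<and> (\<lambda>d. T2 (lam d) d \<rho> \<epsilon> (a d) (b d) (c d) - T2a (lam d) d \<rho> \<epsilon> (a d) (b d) (c d))
            \<in> \<Theta>(\<lambda>d. ln (real d))
      \<and> (\<exists>f g :: nat \<Rightarrow> real. f \<in> O(\<lambda>d. 1 / (lam d)^2) \<and> g \<in> o(\<lambda>d. 1) \<and>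
           (\<forall>\<^sub>F d in at_top. align d (a d (T2 (lam d) d \<rho> \<epsilon> (a d) (b d) (c d)))
                                     (b d (T2 (lam d) d \<rho> \<epsilon> (a d) (b d) (c d)))
                                     (c d (T2 (lam d) d \<rho> \<epsilon> (a d) (b d) (c d)))
                               = 1 - f d - g d))"
proof -
  obtain kap where kap: "kap > 0"
    and evk: "eventually (\<lambda>d. norm (lam d) \<ge> kap * norm (ln (real d))) at_top"
    using lam_lower unfolding bigomega_def by blast
  obtain Ku where Ku: "Ku > 0"
    and evK: "eventually (\<lambda>d. norm (lam d) \<le> Ku * norm (real d)) at_top"
    using lam_upper unfolding bigo_def by blast
  define K1 where "K1 = (28 / kap + 1) * (1 + 27 / (4 * \<epsilon>)) + 1 / (4 * \<epsilon>) + ln (3 * (1 + Ku)) * (1 + 7 / \<epsilon>)"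
  define K2 where "K2 = c0 * (1 + 7 / \<epsilon>)"
  have "7 / \<epsilon> > 0" using eps by simp
  then have "1 + 7 / \<epsilon> > 0" by linarith
  then have K2: "K2 > 0" unfolding K2_def by (rule mult_pos_pos[OF c0_pos])
  note pos = c0_pos kap Ku eps(1) rho(1) K2
  define Q where "Q = (\<lambda>x::real. ln x powr (-c0) < 1/3
     \<and> ln x powr (-c0) * exp (24 * (1/kap)) \<le> 1/16
     \<and> ln x powr (-c0) * exp (8 * (1/kap)) \<le> 1/16
     \<and> ln x powr (-c0) * x^3 \<ge> (1 + Ku) / 8
     \<and> x \<ge> 34 \<and> x \<ge> 2 + 4 / \<epsilon>
     \<and> exp (24 * (K1 + K2 * ln (ln x))) / x < \<rho>
     \<and> ln x - 24 * (K1 + K2 * ln (ln x)) \<ge> ln x / 2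
     \<and> ln (1 + Ku) + ln x + c0 * ln (ln x) + 12 * (K1 + K2 * ln (ln x)) \<le> 2 * ln x
     \<and> ln x \<ge> 4 * ln (1 / \<rho>))"
  have evQ: "eventually Q at_top"
    unfolding Q_def
    using a1[OF pos] a2[OF pos] a3[OF pos] a4[OF pos] a5[OF pos] a5b[OF pos] a6[OF pos] a7[OF pos] a8[OF pos] a9[OF pos]
    by (intro eventually_conj) auto
  define G where "G = (\<lambda>d. d \<ge> 3 \<and> lam d > 0 \<and> kap * ln (real d) \<le> lam d \<and> lam d \<le> Ku * real d \<and> Q (real d))"
  have evG: "eventually G at_top"
  proof -
    have "eventually (\<lambda>d::nat. d \<ge> 3) at_top" by (rule eventually_ge_at_top)
    moreover note evk evK ev_nat[OF evQ]
    ultimately show ?thesis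
    proof eventually_elim
      case (elim d)
      have l: "lam d > 0" using lam_pos elim by simp
      have ln0: "ln (real d) \<ge> 0" using elim by simp
      show ?case unfolding G_def using elim l ln0 by auto
    qed
  qed
  define S2a where "S2a = (\<lambda>d. T2a (lam d) d \<rho> \<epsilon> (a d) (b d) (c d))"
  define S2 where "S2 = (\<lambda>d. T2 (lam d) d \<rho> \<epsilon> (a d) (b d) (c d))"
  define H where "H = (\<lambda>d. ln (real d) / 96 \<le> S2 d - S2a d
    \<and> S2 d - S2a d \<le> 2 * ln (real d) / 11
    \<and> ln (1 / a d (S2a d)) / 48 \<le> S2 d - S2a d
    \<and> S2 d - S2a d \<le> ln (1 / a d (S2a d)) / 11
    \<and> ln (1 / a d (S2a d)) \<ge> 0
    \<and> \<bar>1 - align d (a d (S2 d)) (b d (S2 d)) (c d (S2 d))\<bar>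
        \<le> (1 / (9 * kap^2 * (ln (real d))^2) + 1 / (real d - 2)) / \<rho>^2)"
  have evH: "eventually H at_top"
    using evG
  proof eventually_elim
    case (elim d)
    then have g: "d \<ge> 3" "lam d > 0" "kap * ln (real d) \<le> lam d" "lam d \<le> Ku * real d" "Q (real d)"
      unfolding G_def by auto
    have s: "is_sol (lam d) d (ln (real d) powr (- c0) / (real d + lam d)) (a d) (b d) (c d)"
      using sol g(1) by simp
    show ?case unfolding H_def S2_def S2a_def
      by (rule perd[OF refl refl K1_def K2_def c0_pos g(1) g(2) kap Ku g(3) g(4) rho eps s])
         (use g(5) in \<open>simp_all add: Q_def\<close>)
  qed
  have th1: "(\<lambda>d. S2 d - S2a d) \<in> \<Theta>(\<lambda>d. ln (1 / a d (S2a d)))"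
  proof (rule bigthetaI'[of "1/48" "1/11"])
    show "eventually (\<lambda>d. 1/48 * norm (ln (1 / a d (S2a d))) \<le> norm (S2 d - S2a d)
        \<and> norm (S2 d - S2a d) \<le> 1/11 * norm (ln (1 / a d (S2a d)))) at_top"
      using evH by eventually_elim (auto simp: H_def)
  qed auto
  have th2: "(\<lambda>d. S2 d - S2a d) \<in> \<Theta>(\<lambda>d. ln (real d))"
  proof (rule bigthetaI'[of "1/96" "2/11"])
    show "eventually (\<lambda>d. 1/96 * norm (ln (real d)) \<le> norm (S2 d - S2a d)
        \<and> norm (S2 d - S2a d) \<le> 2/11 * norm (ln (real d))) at_top"
      using evH evG
    proof eventually_elim
      case (elim d)
      then have "ln (real d) \<ge> 0" unfolding G_def by simp
      then show ?case using elim(1) unfolding H_def by auto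
    qed
  qed auto
  define g where "g = (\<lambda>d. 1 - align d (a d (S2 d)) (b d (S2 d)) (c d (S2 d)))"
  have f0: "(\<lambda>d::nat. 0::real) \<in> O(\<lambda>d. 1 / (lam d)^2)"
    by (rule bigoI[of _ 1]) simp
  have go: "g \<in> o(\<lambda>d. 1)"
    unfolding smallo_def
  proof (intro CollectI allI impI)
    fix e :: real assume e: "e > 0"
    have "eventually (\<lambda>x::real. (1 / (9 * kap^2 * (ln x)^2) + 1 / (x - 2)) / \<rho>^2 \<le> e) at_top"
      by (rule a10[OF pos e])
    from ev_nat[OF this] evH
    show "eventually (\<lambda>d. norm (g d) \<le> e * norm (1::real)) at_top"
    proof eventually_elim
      case (elim d)
      then show ?case unfolding g_def H_def by auto
    qed
  qed
  have al: "\<forall>\<^sub>F d in at_top. align d (a d (S2 d)) (b d (S2 d)) (c d (S2 d)) = 1 - 0 - g d"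
    unfolding g_def by simp
  show ?thesis
    using th1 th2 f0 go al unfolding S2_def S2a_def by blast
qed

end
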